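(* The $\sigma$-algebra $\mathcal{M}$ of $\mu$-measurable subsets of $\mathbb{R}_{>0}$ coincides with the $\sigma$-algebra of Lebesgue measurable subsets of $\mathbb{R}_{>0}$, and for every $E\in\mathcal{M}$, $$\mu(E)=\exp\Big(\int_E\frac{dx}{x}\Big)$$ (with the convention $\exp(+\infty)=+\infty$).
   Context: $\mathbb{R}_{>0}=(0,\infty)$ carries the usual topology. For a closed interval $I=[a,b]$ with $0<a<b<\infty$, set $\ell(I)=b\cdot a^{-1}$. A cover of a set $E\subseteq\mathbb{R}_{>0}$ is a countable collection $S$ of closed intervals $[a,b]$ with $0<a<b<\infty$ such that $E\subseteq\bigcup_{I\in S}I$; set $\nu(S)=\prod_{I\in S}\ell(I)\in[1,+\infty]$ (a product of factors $\ge1$, equal to the supremum of its finite partial products, independent of ordering). The exterior measure of $E\subseteq\mathbb{R}_{>0}$ is $\mu_e(E)=\inf_S \nu(S)$, the infimum over all covers $S$ of $E$. A set $E\subseteq\mathbb{R}_{>0}$ is $\mu$-measurable if for every $\epsilon>0$ there is an open set $G\subseteq\mathbb{R}_{>0}$ with $E\subseteq G$ and $\mu_e(G\setminus E)<1+\epsilon$; for such $E$, $\mu(E):=\mu_e(E)$, and $\mathcal{M}$ denotes the collection of $\mu$-measurable sets. *)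

theory Defs
  imports "HOL-Analysis.Analysis"
begin

text \<open>A closed interval [a,b] with 0 < a < b < infinity is represented by the pair (a,b).\<close>

definition ell :: "real \<times> real \<Rightarrow> real" where
  "ell I = snd I / fst I"

definition is_cover :: "(real \<times> real) set \<Rightarrow> real set \<Rightarrow> bool" where
  "is_cover S E \<longleftrightarrow> countable S \<and> (\<forall>(a,b)\<in>S. 0 < a \<and> a < b)
      \<and> E \<subseteq> (\<Union>(a,b)\<in>S. {a..b})"

text \<open>nu(S): product of the lengths, i.e. the supremum of the finite partial products.\<close>
definition nu :: "(real \<times> real) set \<Rightarrow> ennreal" where
  "nu S = (SUP F \<in> {F. finite F \<and> F \<subseteq> S}. (\<Prod>I\<in>F. ennreal (ell I)))"

definition mu_e :: "real set \<Rightarrow> ennreal" where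
  "mu_e E = (INF S \<in> {S. is_cover S E}. nu S)"

definition mu_measurable :: "real set \<Rightarrow> bool" where
  "mu_measurable E \<longleftrightarrow> E \<subseteq> {0<..} \<and>
     (\<forall>\<epsilon>>0. \<exists>G. open G \<and> G \<subseteq> {0<..} \<and> E \<subseteq> G \<and> mu_e (G - E) < ennreal (1 + \<epsilon>))"

definition mu_sets :: "real set set" where
  "mu_sets = {E. mu_measurable E}"

definition mu :: "real set \<Rightarrow> ennreal" where
  "mu E = mu_e E"

definition ennexp :: "ennreal \<Rightarrow> ennreal" where
  "ennexp t = (if t = \<infinity> then \<infinity> else ennreal (exp (enn2real t)))"

end

theory Submission
  imports Defs
begin


lemma comp_interval:
  fixes U C :: "real set"
  assumes U: "open U" "emeasure lebesgue U < \<infinity>" and C: "C \<in> components U"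
  shows "bdd_above C" "bdd_below C" "{Inf C<..<Sup C} \<subseteq> C" "C \<subseteq> {Inf C..Sup C}" "Inf C < Sup C"
    "ennreal (Sup C - Inf C) \<le> emeasure lebesgue C"
proof -
  have oC: "open C" using open_components[OF U(1) C] .
  have iC: "is_interval C" using in_components_connected[OF C] is_interval_connected_1 by blast
  have ne: "C \<noteq> {}" using in_components_nonempty[OF C] .
  have CU: "C \<subseteq> U" using C in_components_subset by blast
  have Ub: "U \<in> sets lebesgue" using U(1) by (simp add: borel_open)
  have big: False if "{c..c + n} \<subseteq> C" "n > enn2real (emeasure lebesgue U)" "n \<ge> 0" for c n
  proof -
    have "ennreal n = emeasure lebesgue {c..c+n}" using that by simp
    also have "\<dots> \<le> emeasure lebesgue U" using that CU Ub by (intro emeasure_mono) auto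
    also have "\<dots> = ennreal (enn2real (emeasure lebesgue U))" using U(2) by (simp add: ennreal_enn2real)
    finally have "n \<le> enn2real (emeasure lebesgue U)" by (simp add: ennreal_le_iff)
    then show False using that by simp
  qed
  obtain c where c: "c \<in> C" using ne by blast
  define n where "n = enn2real (emeasure lebesgue U) + 1"
  have n: "n > enn2real (emeasure lebesgue U)" "n \<ge> 0" unfolding n_def by auto
  show ba: "bdd_above C"
  proof (rule ccontr)
    assume "\<not> bdd_above C"
    then obtain y where "y \<in> C" "y > c + n" unfolding bdd_above_def using not_le by blast
    then have "{c..c + n} \<subseteq> C" using iC c unfolding is_interval_1 by (meson atLeastAtMost_iff less_imp_le order_trans subsetI)
    then show False using big n by blast
  qed
  show bb: "bdd_below C"
  proof (rule ccontr)
    assume "\<not> bdd_below C"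
    then obtain y where "y \<in> C" "y < c - n" unfolding bdd_below_def using not_le by blast
    then have "{(c - n)..(c-n) + n} \<subseteq> C" using iC c unfolding is_interval_1 by (smt (verit) atLeastAtMost_iff subsetI)
    then show False using big n by blast
  qed
  show sub: "{Inf C<..<Sup C} \<subseteq> C"
  proof
    fix x assume "x \<in> {Inf C<..<Sup C}"
    then have "Inf C < x" "x < Sup C" by auto
    then obtain a b where "a \<in> C" "a < x" "b \<in> C" "x < b"
      using cInf_less_iff[OF ne bb] less_cSup_iff[OF ne ba] by metis
    then show "x \<in> C" using iC unfolding is_interval_1 by (meson less_imp_le)
  qed
  show "C \<subseteq> {Inf C..Sup C}" using ba bb by (auto intro: cInf_lower cSup_upper)
  obtain e where e: "e > 0" "ball c e \<subseteq> C" using oC c open_contains_ball by blast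
  have "c + e/2 \<in> C" using e by (auto simp: dist_real_def)
  then have "Sup C \<ge> c + e/2" using ba by (simp add: cSup_upper)
  moreover have "Inf C \<le> c" using bb c by (simp add: cInf_lower)
  ultimately show lt: "Inf C < Sup C" using e by linarith
  have "ennreal (Sup C - Inf C) = emeasure lebesgue {Inf C<..<Sup C}" using lt by simp
  also have "\<dots> \<le> emeasure lebesgue C" using sub oC by (intro emeasure_mono) (auto simp: borel_open)
  finally show "ennreal (Sup C - Inf C) \<le> emeasure lebesgue C" .
qed



lemma open_cover:
  fixes U A :: "real set"
  assumes U: "open U" "emeasure lebesgue U < \<infinity>" and AU: "A \<subseteq> U"
  shows "\<exists>S. is_cover S (exp ` A) \<and> nu S \<le> ennreal (exp (measure lebesgue U))"
proof -
  define g where "g C = (exp (Inf C), exp (Sup C))" for C :: "real set"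
  define S where "S = g ` components U"
  have cnt: "countable (components U)"
    by (rule countable_disjoint_open_subsets) (auto simp: open_components[OF U(1)] pairwise_def disjnt_def components_nonoverlap)
  have Ub: "U \<in> sets lebesgue" using U(1) by (simp add: borel_open)
  note ci = comp_interval[OF U(1) U(2)]
  have inj: "inj_on g (components U)"
  proof (rule inj_onI)
    fix C D assume C: "C \<in> components U" and D: "D \<in> components U" and "g C = g D"
    then have e: "Inf C = Inf D" "Sup C = Sup D" by (auto simp: g_def)
    have "(Inf C + Sup C)/2 \<in> C" using ci(3)[OF C] ci(5)[OF C] by auto
    moreover have "(Inf C + Sup C)/2 \<in> D" using ci(3)[OF D] ci(5)[OF D] e by auto
    ultimately show "C = D" using components_nonoverlap[OF C D] by blast
  qed
  have cov: "is_cover S (exp ` A)"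
    unfolding is_cover_def
  proof (intro conjI)
    show "countable S" unfolding S_def using cnt by simp
    show "\<forall>(a, b)\<in>S. 0 < a \<and> a < b" unfolding S_def g_def using ci(5) by auto
    show "exp ` A \<subseteq> (\<Union>(a, b)\<in>S. {a..b})"
    proof
      fix y assume "y \<in> exp ` A"
      then obtain x where x: "x \<in> A" "y = exp x" by blast
      then obtain C where C: "C \<in> components U" "x \<in> C" using AU Union_components[of U] by blast
      then have "Inf C \<le> x" "x \<le> Sup C" using ci(4)[OF C(1)] by auto
      then have "y \<in> {exp (Inf C)..exp (Sup C)}" using x by auto
      then show "y \<in> (\<Union>(a, b)\<in>S. {a..b})" unfolding S_def g_def using C by force
    qed
  qed
  have "nu S \<le> ennreal (exp (measure lebesgue U))"
    unfolding nu_def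
  proof (rule SUP_least)
    fix F assume "F \<in> {F. finite F \<and> F \<subseteq> S}"
    then have F: "finite F" "F \<subseteq> g ` components U" unfolding S_def by auto
    then obtain F' where F': "F' \<subseteq> components U" "finite F'" "F = g ` F'"
      by (meson finite_subset_image)
    have injF': "inj_on g F'" using inj F'(1) inj_on_subset by blast
    have "(\<Prod>I\<in>F. ennreal (ell I)) = (\<Prod>C\<in>F'. ennreal (ell (g C)))"
      using F'(3) injF' by (simp add: prod.reindex)
    also have "\<dots> = (\<Prod>C\<in>F'. ennreal (exp (Sup C - Inf C)))"
      by (intro prod.cong refl) (simp add: g_def ell_def exp_diff)
    also have "\<dots> = ennreal (\<Prod>C\<in>F'. exp (Sup C - Inf C))"
      by (rule prod_ennreal) simp
    also have "\<dots> = ennreal (exp (\<Sum>C\<in>F'. Sup C - Inf C))"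
      using F'(2) by (simp add: exp_sum)
    also have "\<dots> \<le> ennreal (exp (measure lebesgue U))"
    proof -
      have "ennreal (\<Sum>C\<in>F'. Sup C - Inf C) = (\<Sum>C\<in>F'. ennreal (Sup C - Inf C))"
        using ci(5) F'(1) by (subst sum_ennreal) (auto simp: less_imp_le)
      also have "\<dots> \<le> (\<Sum>C\<in>F'. emeasure lebesgue C)"
        using ci(6) F'(1) by (intro sum_mono) auto
      also have "\<dots> = emeasure lebesgue (\<Union>C\<in>F'. C)"
      proof (rule sum_emeasure)
        show "disjoint_family_on (\<lambda>C. C) F'" unfolding disjoint_family_on_def
          using F'(1) components_nonoverlap by blast
      qed (use F'(1,2) open_components[OF U(1)] in \<open>auto simp: borel_open\<close>)
      also have "\<dots> \<le> emeasure lebesgue U"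
        using F'(1) Ub by (intro emeasure_mono) (auto dest: in_components_subset)
      also have "\<dots> = ennreal (measure lebesgue U)"
        using U(2) by (simp add: emeasure_eq_measure2 fmeasurableI Ub) 
      finally have "(\<Sum>C\<in>F'. Sup C - Inf C) \<le> measure lebesgue U"
        by (simp add: ennreal_le_iff)
      then show ?thesis by (simp add: ennreal_leI)
    qed
    finally show "(\<Prod>I\<in>F. ennreal (ell I)) \<le> ennreal (exp (measure lebesgue U))" .
  qed
  with cov show ?thesis by blast
qed



lemma exp_ln_image: "E \<subseteq> {0<..} \<Longrightarrow> exp ` ln ` E = (E::real set)"
  by (force simp: image_iff)

lemma mu_e_le:
  fixes E :: "real set"
  assumes E: "E \<subseteq> {0<..}"
  shows "mu_e E \<le> ennexp (outer_measure_of lebesgue (ln ` E))"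
proof (cases "outer_measure_of lebesgue (ln ` E) = \<infinity>")
  case True then show ?thesis by (simp add: ennexp_def)
next
  case False
  define r where "r = enn2real (outer_measure_of lebesgue (ln ` E))"
  have rE: "outer_measure_of lebesgue (ln ` E) = ennreal r" using False
    by (simp add: r_def ennreal_enn2real_if)
  have r0: "r \<ge> 0" by (simp add: r_def)
  have ex: "ennexp (outer_measure_of lebesgue (ln ` E)) = ennreal (exp r)"
    using False by (simp add: ennexp_def r_def)
  show ?thesis unfolding ex
  proof (rule ennreal_le_epsilon)
    fix e :: real assume "0 < e"
    define d where "d = ln (1 + e / exp r)"
    have "1 < 1 + e / exp r" using \<open>0 < e\<close> by simp
    then have d: "d > 0" unfolding d_def by (rule ln_gt_zero)
    have "exp d = 1 + e / exp r" unfolding d_def using \<open>1 < 1 + e / exp r\<close> by (intro exp_ln) linarith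
    then have ed: "exp (r + d) = exp r + e"
      by (simp add: exp_add field_simps)
    obtain B where B: "B \<in> sets lebesgue" "ln ` E \<subseteq> B" "outer_measure_of lebesgue (ln ` E) = emeasure lebesgue B"
      using outer_measure_of_attain[of "ln ` E" lebesgue] by auto
    obtain T where T: "open T" "B \<subseteq> T" "T - B \<in> lmeasurable" "emeasure lebesgue (T - B) < ennreal d"
      using sets_lebesgue_outer_open[OF B(1) d] by blast
    have "emeasure lebesgue T = emeasure lebesgue (B \<union> (T - B))" using T(2) by (simp add: Un_absorb1)
    also have "\<dots> \<le> emeasure lebesgue B + emeasure lebesgue (T - B)"
      using B(1) T(3) by (intro emeasure_subadditive) auto
    also have "\<dots> = ennreal r + emeasure lebesgue (T - B)" using B(3) rE by simp
    also have "\<dots> < ennreal r + ennreal d" using T(4)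
      by (simp add: ennreal_add_left_cancel_less)
    also have "\<dots> = ennreal (r + d)" using r0 d by simp
    finally have Tl: "emeasure lebesgue T < ennreal (r + d)" .
    then have Tfin: "emeasure lebesgue T < \<infinity>" using less_trans by fastforce
    have mT: "measure lebesgue T \<le> r + d"
      using Tl Tfin r0 d
      by (metis emeasure_eq_measure2 borel_open T(1) sets_completionI_sets sets_lborel fmeasurableI less_imp_le ennreal_le_iff add_nonneg_nonneg  less_le)
    obtain S where S: "is_cover S (exp ` ln ` E)" "nu S \<le> ennreal (exp (measure lebesgue T))"
      using open_cover[OF T(1) Tfin] B(2) T(2) by blast
    have "mu_e E \<le> nu S" unfolding mu_e_def using S(1) exp_ln_image[OF E]
      by (intro INF_lower) auto
    also have "\<dots> \<le> ennreal (exp (r + d))" using S(2) mT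
      by (meson ennreal_leI exp_le_cancel_iff order_trans)
    also have "\<dots> = ennreal (exp r) + ennreal e" using ed \<open>0 < e\<close> by (simp add: ennreal_plus)
    finally show "mu_e E \<le> ennreal (exp r) + ennreal e" .
  qed
qed



lemma cover_ge:
  fixes E :: "real set"
  assumes E: "E \<subseteq> {0<..}" and S: "is_cover S E"
  shows "ennexp (outer_measure_of lebesgue (ln ` E)) \<le> nu S"
proof (cases "nu S = \<infinity>")
  case True then show ?thesis by simp
next
  case False
  define c where "c = enn2real (nu S)"
  have nuc: "nu S = ennreal c" using False by (simp add: c_def ennreal_enn2real_if)
  have Scnt: "countable S" and Spos: "\<And>a b. (a, b) \<in> S \<Longrightarrow> 0 < a \<and> a < b"
    and Scov: "E \<subseteq> (\<Union>(a,b)\<in>S. {a..b})" using S unfolding is_cover_def by auto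
  have ellpos: "0 < ell p" if "p \<in> S" for p
    using Spos[of "fst p" "snd p"] that by (simp add: ell_def)
  have fin: "(\<Prod>I\<in>F. ell I) \<le> c" if "finite F" "F \<subseteq> S" for F
  proof -
    have "ennreal (\<Prod>I\<in>F. ell I) = (\<Prod>I\<in>F. ennreal (ell I))"
      using that ellpos by (intro prod_ennreal[symmetric]) (auto intro: less_imp_le)
    also have "\<dots> \<le> nu S" unfolding nu_def using that by (intro SUP_upper) auto
    finally have "ennreal (\<Prod>I\<in>F. ell I) \<le> ennreal c" using nuc by simp
    moreover have p0: "0 < (\<Prod>I\<in>F. ell I)" using that ellpos by (intro prod_pos) auto
    ultimately show ?thesis by (simp add: ennreal_le_iff2)
  qed
  have c1: "1 \<le> c" using fin[of "{}"] by simp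
  define A where "A p = {ln (fst p)..ln (snd p)}" for p :: "real \<times> real"
  have bound: "measure lebesgue (\<Union>p\<in>F. A p) \<le> ln c" if "F \<subseteq> S" "finite F" for F
  proof -
    have "measure lebesgue (\<Union>p\<in>F. A p) \<le> (\<Sum>p\<in>F. measure lebesgue (A p))"
      using that by (intro measure_UNION_le) (auto simp: A_def)
    also have "\<dots> = (\<Sum>p\<in>F. ln (ell p))"
    proof (intro sum.cong refl)
      fix p assume "p \<in> F"
      then have "0 < fst p" "fst p < snd p" using Spos that(1) by (cases p; auto)+
      then show "measure lebesgue (A p) = ln (ell p)"
        by (simp add: A_def ell_def ln_div)
    qed
    also have "\<dots> = ln (\<Prod>p\<in>F. ell p)"
      using that ellpos by (subst ln_prod) (auto, fastforce)
    also have "\<dots> \<le> ln c"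
      using that ellpos fin[OF that(2,1)] c1 by (subst ln_le_cancel_iff) (auto intro!: prod_pos)
    finally show ?thesis .
  qed
  have Ufm: "(\<Union>p\<in>S. A p) \<in> lmeasurable" and Um: "measure lebesgue (\<Union>p\<in>S. A p) \<le> ln c"
    using fmeasurable_UN_bound[OF Scnt _ bound] measure_UN_bound[OF Scnt _ bound]
    by (auto simp: A_def)
  have sub: "ln ` E \<subseteq> (\<Union>p\<in>S. A p)"
  proof
    fix y assume "y \<in> ln ` E"
    then obtain x where x: "x \<in> E" "y = ln x" by blast
    then obtain p where "p \<in> S" "x \<in> {fst p..snd p}" using Scov by auto
    then obtain a b where ab: "(a,b) \<in> S" "a \<le> x" "x \<le> b" by (cases p) auto
    then have "0 < a" using Spos by auto
    then have "ln a \<le> y" "y \<le> ln b" using ab x by auto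
    then show "y \<in> (\<Union>p\<in>S. A p)" using ab(1) unfolding A_def by force
  qed
  have "outer_measure_of lebesgue (ln ` E) \<le> emeasure lebesgue (\<Union>p\<in>S. A p)"
    unfolding outer_measure_of_def using Ufm sub by (intro INF_lower) auto
  also have "\<dots> = ennreal (measure lebesgue (\<Union>p\<in>S. A p))" using Ufm by (simp add: emeasure_eq_measure2)
  also have "\<dots> \<le> ennreal (ln c)" using Um by (simp add: ennreal_leI)
  finally have le: "outer_measure_of lebesgue (ln ` E) \<le> ennreal (ln c)" .
  then have nt: "outer_measure_of lebesgue (ln ` E) \<noteq> \<infinity>" by (auto simp: top_unique)
  have "enn2real (outer_measure_of lebesgue (ln ` E)) \<le> enn2real (ennreal (ln c))"
    using le by (intro enn2real_mono) auto
  also have "\<dots> = ln c" using c1 by simp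
  finally have "enn2real (outer_measure_of lebesgue (ln ` E)) \<le> ln c" .
  then have "exp (enn2real (outer_measure_of lebesgue (ln ` E))) \<le> c"
    using c1 by (metis exp_le_cancel_iff exp_ln less_le_trans zero_less_one)
  then show ?thesis using nt nuc by (simp add: ennexp_def ennreal_leI)
qed

lemma mu_e_eq:
  fixes E :: "real set"
  assumes E: "E \<subseteq> {0<..}"
  shows "mu_e E = ennexp (outer_measure_of lebesgue (ln ` E))"
proof (rule antisym)
  show "mu_e E \<le> ennexp (outer_measure_of lebesgue (ln ` E))" by (rule mu_e_le[OF E])
  show "ennexp (outer_measure_of lebesgue (ln ` E)) \<le> mu_e E"
    unfolding mu_e_def by (intro INF_greatest cover_ge[OF E]) auto
qed



lemma lebesgue_iff_outer_open:
  fixes A :: "real set"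
  shows "A \<in> sets lebesgue \<longleftrightarrow> (\<forall>e>0. \<exists>V. open V \<and> A \<subseteq> V \<and> outer_measure_of lebesgue (V - A) < ennreal e)"
proof
  assume A: "A \<in> sets lebesgue"
  show "\<forall>e>0. \<exists>V. open V \<and> A \<subseteq> V \<and> outer_measure_of lebesgue (V - A) < ennreal e"
  proof (intro allI impI)
    fix e :: real assume "e > 0"
    then obtain T where T: "open T" "A \<subseteq> T" "(T - A) \<in> lmeasurable" "emeasure lebesgue (T - A) < ennreal e"
      using sets_lebesgue_outer_open[OF A] by metis
    then show "\<exists>V. open V \<and> A \<subseteq> V \<and> outer_measure_of lebesgue (V - A) < ennreal e"
      by (intro exI[of _ T]) auto
  qed
next
  assume H: "\<forall>e>0. \<exists>V. open V \<and> A \<subseteq> V \<and> outer_measure_of lebesgue (V - A) < ennreal e"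
  have "\<forall>n. \<exists>V. open V \<and> A \<subseteq> V \<and> outer_measure_of lebesgue (V - A) < ennreal (1 / Suc n)"
    using H by simp
  then obtain V where V: "\<And>n. open (V n)" "\<And>n. A \<subseteq> V n" "\<And>n. outer_measure_of lebesgue (V n - A) < ennreal (1 / Suc n)"
    by metis
  define W where "W = (\<Inter>n. V n)"
  have Wm: "W \<in> sets lebesgue" unfolding W_def using V(1) by (auto simp: borel_open)
  have AW: "A \<subseteq> W" using V(2) by (auto simp: W_def)
  have z: "outer_measure_of lebesgue (W - A) \<le> 0"
  proof (rule ennreal_le_epsilon)
    fix e :: real assume "0 < e"
    then obtain n where n: "1 / Suc n < e"
      by (metis nat_approx_posE)
    have "outer_measure_of lebesgue (W - A) \<le> outer_measure_of lebesgue (V n - A)"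
      by (rule outer_measure_of_mono) (auto simp: W_def)
    also have "\<dots> \<le> ennreal (1 / Suc n)" using V(3)[of n] by simp
    also have "\<dots> \<le> ennreal e" using n by (simp add: ennreal_leI)
    finally show "outer_measure_of lebesgue (W - A) \<le> 0 + ennreal e" by simp
  qed
  obtain B where B: "B \<in> sets lebesgue" "W - A \<subseteq> B" "outer_measure_of lebesgue (W - A) = emeasure lebesgue B"
    using outer_measure_of_attain[of "W - A" lebesgue] by auto
  then have "B \<in> null_sets lebesgue" using z by (simp add: null_sets_def)
  then have "W - A \<in> null_sets lebesgue" using B(2) null_sets_completion_subset by blast
  then have "W - (W - A) \<in> sets lebesgue" using Wm by auto
  moreover have "W - (W - A) = A" using AW by auto
  ultimately show "A \<in> sets lebesgue" by simp
qed

lemma ln_image_diff: "E \<subseteq> G \<Longrightarrow> G \<subseteq> {0<..} \<Longrightarrow> ln ` (G - E) = ln ` G - ln ` (E::real set)"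
  by (rule inj_on_image_set_diff[of ln "{0<..}"]) (auto simp: inj_on_def)

lemma open_ln_image: "open G \<Longrightarrow> G \<subseteq> {0<..} \<Longrightarrow> open (ln ` (G::real set))"
proof -
  assume G: "open G" "G \<subseteq> {0<..}"
  have "ln ` G = exp -` G"
  proof
    show "ln ` G \<subseteq> exp -` G" using G(2) by auto
    show "exp -` G \<subseteq> ln ` G"
    proof
      fix y assume "y \<in> exp -` G"
      then have "exp y \<in> G" "y = ln (exp y)" by auto
      then show "y \<in> ln ` G" by blast
    qed
  qed
  moreover have "open (exp -` G)" using G(1) by (intro continuous_open_vimage) (auto intro: continuous_intros)
  ultimately show ?thesis by simp
qed

lemma open_exp_image: "open V \<Longrightarrow> open (exp ` (V::real set))"
proof -
  assume V: "open V"
  have "exp ` V = ln -` V \<inter> {0<..}"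
  proof
    show "exp ` V \<subseteq> ln -` V \<inter> {0<..}" by auto
    show "ln -` V \<inter> {0<..} \<subseteq> exp ` V"
    proof
      fix x assume "x \<in> ln -` V \<inter> {0<..}"
      then have "ln x \<in> V" "x = exp (ln x)" by auto
      then show "x \<in> exp ` V" by blast
    qed
  qed
  moreover have "open (ln -` V \<inter> {0<..})"
  proof -
  have c: "continuous_on {0<..} (ln :: real \<Rightarrow> real)" by (intro continuous_intros) auto
  have o: "open ({0<..}::real set)" by (rule open_greaterThan)
  show "open (ln -` V \<inter> {0<..})" using V continuous_on_open_vimage[OF o, of ln] c by blast
  qed
  ultimately show ?thesis by simp
qed

lemma ennexp_less: "ennexp t < ennreal (exp e) \<longleftrightarrow> t < ennreal e"
proof (cases "t = \<infinity>")
  case True then show ?thesis by (simp add: ennexp_def)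
next
  case False
  then obtain r where r: "t = ennreal r" "r \<ge> 0" by (cases t rule: ennreal_cases) auto
  show ?thesis
  proof (cases "e \<ge> 0")
    case True
    then show ?thesis using r by (simp add: ennexp_def ennreal_less_iff)
  next
    case False
    then have "exp e < exp r" using r by simp
    then show ?thesis using r False by (simp add: ennexp_def ennreal_less_iff ennreal_neg)
  qed
qed

lemma mu_measurable_iff:
  fixes E :: "real set"
  assumes E: "E \<subseteq> {0<..}"
  shows "mu_measurable E \<longleftrightarrow> ln ` E \<in> sets lebesgue"
proof
  assume M: "mu_measurable E"
  show "ln ` E \<in> sets lebesgue" unfolding lebesgue_iff_outer_open
  proof (intro allI impI)
    fix e :: real assume "e > 0"
    then have "exp e - 1 > 0" by simp
    then obtain G where G: "open G" "G \<subseteq> {0<..}" "E \<subseteq> G" "mu_e (G - E) < ennreal (1 + (exp e - 1))"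
      using M unfolding mu_measurable_def by blast
    have "mu_e (G - E) = ennexp (outer_measure_of lebesgue (ln ` G - ln ` E))"
      using G by (simp add: mu_e_eq ln_image_diff subset_iff)
    then have "outer_measure_of lebesgue (ln ` G - ln ` E) < ennreal e"
      using G(4) by (simp add: ennexp_less)
    moreover have "ln ` E \<subseteq> ln ` G" using G(3) by auto
    ultimately show "\<exists>V. open V \<and> ln ` E \<subseteq> V \<and> outer_measure_of lebesgue (V - ln ` E) < ennreal e"
      using open_ln_image[OF G(1,2)] by blast
  qed
next
  assume L: "ln ` E \<in> sets lebesgue"
  show "mu_measurable E" unfolding mu_measurable_def
  proof (intro conjI allI impI E)
    fix \<epsilon> :: real assume "\<epsilon> > 0"
    define e where "e = ln (1 + \<epsilon>)"
    have "1 < 1 + \<epsilon>" using \<open>\<epsilon> > 0\<close> by simp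
    then have e: "e > 0" "exp e = 1 + \<epsilon>" unfolding e_def by (auto intro: ln_gt_zero)
    obtain V where V: "open V" "ln ` E \<subseteq> V" "outer_measure_of lebesgue (V - ln ` E) < ennreal e"
      using L e(1) unfolding lebesgue_iff_outer_open by blast
    define G where "G = exp ` V"
    have "exp ` ln ` E \<subseteq> G" unfolding G_def using V(2) by (rule image_mono)
    then have G: "open G" "G \<subseteq> {0<..}" "E \<subseteq> G" using V open_exp_image exp_ln_image[OF E]
      by (auto simp: G_def) 
    have lG: "ln ` G = V" by (force simp: G_def image_iff)
    have "mu_e (G - E) = ennexp (outer_measure_of lebesgue (V - ln ` E))"
      using G lG by (simp add: mu_e_eq ln_image_diff subset_iff)
    also have "\<dots> < ennreal (exp e)" using V(3) by (simp add: ennexp_less)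
    finally show "\<exists>G. open G \<and> G \<subseteq> {0<..} \<and> E \<subseteq> G \<and> mu_e (G - E) < ennreal (1 + \<epsilon>)"
      using G e(2) by auto
  qed
qed



lemma ln_diff_at: "0 < x \<Longrightarrow> (ln :: real \<Rightarrow> real) differentiable at x"
  unfolding differentiable_def using DERIV_ln[of x] has_field_derivative_imp_has_derivative by blast

lemma exp_diff_at: "(exp :: real \<Rightarrow> real) differentiable at x"
  unfolding differentiable_def using DERIV_exp[of x] has_field_derivative_imp_has_derivative by blast

lemma ln_differentiable: "E \<subseteq> {0<..} \<Longrightarrow> (ln :: real \<Rightarrow> real) differentiable_on E"
  by (rule differentiable_at_imp_differentiable_on) (auto intro!: ln_diff_at)

lemma sets_ln_iff:
  fixes E :: "real set"
  assumes E: "E \<subseteq> {0<..}"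
  shows "ln ` E \<in> sets lebesgue \<longleftrightarrow> E \<in> sets lebesgue"
proof
  assume "ln ` E \<in> sets lebesgue"
  then have "exp ` ln ` E \<in> sets lebesgue"
    by (rule differentiable_image_in_sets_lebesgue) (auto intro!: differentiable_at_imp_differentiable_on exp_diff_at)
  then show "E \<in> sets lebesgue" using exp_ln_image[OF E] by simp
next
  assume "E \<in> sets lebesgue"
  then show "ln ` E \<in> sets lebesgue"
    by (rule differentiable_image_in_sets_lebesgue) (use ln_differentiable[OF E] in auto)
qed

lemma integral_bounded:
  fixes S :: "real set"
  assumes S: "S \<in> sets lebesgue" "S \<subseteq> {a..b}" "0 < a"
  shows "(\<integral>\<^sup>+ x\<in>S. ennreal (1 / x) \<partial>lebesgue) = emeasure lebesgue (ln ` S)"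
proof -
  have S0: "S \<subseteq> {0<..}" using S by auto
  have lS: "ln ` S \<in> sets lebesgue" using sets_ln_iff[OF S0] S(1) by simp
  have "ln ` S \<subseteq> {ln a..ln b}" using S by auto
  then have "bounded (ln ` S)" by (metis bounded_closed_interval bounded_subset)
  then have lSm: "ln ` S \<in> lmeasurable" using lS by (rule bounded_set_imp_lmeasurable)
  then have int1: "(\<lambda>_. 1::real) integrable_on ln ` S" by (simp add: lmeasurable_iff_integrable_on)
  define b where "b = integral (ln ` S) (\<lambda>_. 1::real)"
  have abs1: "(\<lambda>_. 1::real) absolutely_integrable_on ln ` S"
    using int1 by (rule nonnegative_absolutely_integrable_1) simp
  have der: "(ln has_field_derivative (1 / x)) (at x within S)" if "x \<in> S" for x
    using that S0 by (auto intro!: derivative_eq_intros simp: field_simps)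
  have "inj_on ln ({0<..}::real set)" by (auto simp: inj_on_def)
  then have inj: "inj_on ln S" using S0 inj_on_subset by blast
  have "(\<lambda>x. \<bar>1 / x\<bar> *\<^sub>R (1::real)) absolutely_integrable_on S \<and> integral S (\<lambda>x. \<bar>1 / x\<bar> *\<^sub>R (1::real)) = b"
    using has_absolute_integral_change_of_variables_real[OF S(1) der inj, of "\<lambda>_. 1::real" b] abs1
    by (simp add: b_def)
  then have h1: "((\<lambda>x. \<bar>1 / x\<bar>) has_integral b) S"
    by (simp add: has_integral_iff absolutely_integrable_on_def)
  then have h1': "((\<lambda>x. if x \<in> S then \<bar>1 / x\<bar> else 0) has_integral b) UNIV"
    by (simp add: has_integral_restrict_UNIV)
  have "(\<integral>\<^sup>+ x. ennreal (if x \<in> S then \<bar>1 / x\<bar> else 0) \<partial>lebesgue) = ennreal b"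
    using h1' by (subst (asm) has_integral_iff_nn_integral_lebesgue) auto
  moreover have "(\<integral>\<^sup>+ x. ennreal (if x \<in> S then \<bar>1 / x\<bar> else 0) \<partial>lebesgue) = (\<integral>\<^sup>+ x\<in>S. ennreal (1 / x) \<partial>lebesgue)"
    by (intro nn_integral_cong) (use S0 in \<open>auto simp: indicator_def\<close>)
  moreover have h2: "((\<lambda>_. 1::real) has_integral b) (ln ` S)"
    using int1 by (simp add: b_def has_integral_iff)
  then have "((\<lambda>x. if x \<in> ln ` S then 1 else 0::real) has_integral b) UNIV"
    by (simp add: has_integral_restrict_UNIV)
  then have "(\<integral>\<^sup>+ x. ennreal (if x \<in> ln ` S then 1 else 0) \<partial>lebesgue) = ennreal b"
    by (subst (asm) has_integral_iff_nn_integral_lebesgue) auto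
  moreover have "(\<integral>\<^sup>+ x. ennreal (if x \<in> ln ` S then 1 else 0) \<partial>lebesgue) = emeasure lebesgue (ln ` S)"
  proof -
    have "(\<integral>\<^sup>+ x. ennreal (if x \<in> ln ` S then 1 else 0) \<partial>lebesgue) = (\<integral>\<^sup>+ x. indicator (ln ` S) x \<partial>lebesgue)"
      by (intro nn_integral_cong) (auto simp: indicator_def)
    also have "\<dots> = emeasure lebesgue (ln ` S)" using lS by simp
    finally show ?thesis .
  qed
  ultimately show ?thesis by simp
qed



lemma integral_ln:
  fixes E :: "real set"
  assumes E: "E \<in> sets lebesgue" "E \<subseteq> {0<..}"
  shows "(\<integral>\<^sup>+ x\<in>E. ennreal (1 / x) \<partial>lebesgue) = emeasure lebesgue (ln ` E)"
proof -
  define En where "En n = E \<inter> {exp (- real n)..exp (real n)}" for n :: nat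
  have Enm: "En n \<in> sets lebesgue" for n
    unfolding En_def using E(1) fmeasurableD[OF lmeasurable_interval(1)] by (intro sets.Int) auto
  have inc: "incseq En" unfolding incseq_def En_def
  proof (intro allI impI subsetI)
    fix m n :: nat and x assume mn: "m \<le> n" and x: "x \<in> E \<inter> {exp (- real m)..exp (real m)}"
    have a: "exp (- real n) \<le> exp (- real m)" "exp (real m) \<le> exp (real n)" using mn by auto
    have x1: "exp (- real m) \<le> x" "x \<le> exp (real m)" "x \<in> E" using x by auto
    have "exp (- real n) \<le> x" "x \<le> exp (real n)" using a x1 by linarith+
    then show "x \<in> E \<inter> {exp (- real n)..exp (real n)}" using x1 by auto
  qed
  have Eun: "(\<Union>n. En n) = E"
  proof
    show "(\<Union>n. En n) \<subseteq> E" by (auto simp: En_def)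
    show "E \<subseteq> (\<Union>n. En n)"
    proof
      fix x assume x: "x \<in> E"
      obtain n :: nat where n: "\<bar>ln x\<bar> \<le> real n" using real_arch_simple by blast
      have xp: "0 < x" using x E(2) by auto
      have e: "exp (ln x) = x" using xp by simp
      have "exp (- real n) \<le> exp (ln x)" "exp (ln x) \<le> exp (real n)" using n by auto
      then have "exp (- real n) \<le> x" "x \<le> exp (real n)" by (simp_all only: e)
      then have "x \<in> En n" using x by (auto simp: En_def)
      then show "x \<in> (\<Union>n. En n)" by blast
    qed
  qed
  have each: "(\<integral>\<^sup>+ x\<in>En n. ennreal (1 / x) \<partial>lebesgue) = emeasure lebesgue (ln ` En n)" for n
    by (rule integral_bounded[OF Enm, of n "exp (- real n)" "exp (real n)"]) (auto simp: En_def)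
  have meas: "(\<lambda>x. ennreal (1 / x) * indicator (En n) x) \<in> borel_measurable lebesgue" for n
  proof -
    have "(\<lambda>x::real. ennreal (1 / x)) \<in> borel_measurable lebesgue"
      by (intro measurable_completion) measurable
    then show ?thesis using Enm[of n] by (intro borel_measurable_times_ennreal) auto
  qed
  have incf: "incseq (\<lambda>n x. ennreal (1 / x) * indicator (En n) x)"
    using inc unfolding incseq_def le_fun_def
    by (auto intro!: mult_left_mono simp: indicator_def subset_iff)
  have sup: "(SUP n. ennreal (1 / x) * indicator (En n) x) = ennreal (1 / x) * indicator E x" for x
  proof (cases "x \<in> E")
    case True
    then obtain m where m: "x \<in> En m" using Eun by blast
    show ?thesis
    proof (rule antisym)
      show "(SUP n. ennreal (1 / x) * indicator (En n) x) \<le> ennreal (1 / x) * indicator E x"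
        by (rule SUP_least) (auto simp: indicator_def En_def)
      show "ennreal (1 / x) * indicator E x \<le> (SUP n. ennreal (1 / x) * indicator (En n) x)"
        using m True by (intro SUP_upper2[of m]) auto
    qed
  next
    case False
    then have "x \<notin> En n" for n by (auto simp: En_def)
    then show ?thesis using False by simp
  qed
  have "(\<integral>\<^sup>+ x\<in>E. ennreal (1 / x) \<partial>lebesgue) = (\<integral>\<^sup>+ x. (SUP n. ennreal (1 / x) * indicator (En n) x) \<partial>lebesgue)"
    by (simp add: sup)
  also have "\<dots> = (SUP n. (\<integral>\<^sup>+ x\<in>En n. ennreal (1 / x) \<partial>lebesgue))"
    by (rule nn_integral_monotone_convergence_SUP[OF incf meas])
  also have "\<dots> = (SUP n. emeasure lebesgue (ln ` En n))" by (simp add: each)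
  also have "\<dots> = emeasure lebesgue (\<Union>n. ln ` En n)"
  proof (rule SUP_emeasure_incseq)
    show "range (\<lambda>n. ln ` En n) \<subseteq> sets lebesgue"
    proof (clarsimp)
      fix n
      have "En n \<subseteq> {0<..}" using E(2) by (auto simp: En_def)
      then show "ln ` En n \<in> sets lebesgue" using sets_ln_iff Enm by blast
    qed
    show "incseq (\<lambda>n. ln ` En n)" using inc unfolding incseq_def by (auto intro: image_mono)
  qed
  also have "(\<Union>n. ln ` En n) = ln ` E" using Eun by auto
  finally show ?thesis .
qed

theorem mainTheorem19:
  shows "mu_sets = {E. E \<subseteq> {0<..} \<and> E \<in> sets lebesgue} \<and>
    (\<forall>E\<in>mu_sets. mu E = ennexp (\<integral>\<^sup>+ x\<in>E. ennreal (1 / x) \<partial>lebesgue))"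
proof
  have iff: "E \<in> mu_sets \<longleftrightarrow> E \<subseteq> {0<..} \<and> E \<in> sets lebesgue" for E
  proof
    assume "E \<in> mu_sets"
    then have M: "mu_measurable E" by (simp add: mu_sets_def)
    then have E: "E \<subseteq> {0<..}" by (simp add: mu_measurable_def)
    then show "E \<subseteq> {0<..} \<and> E \<in> sets lebesgue"
      using M mu_measurable_iff[OF E] sets_ln_iff[OF E] by simp
  next
    assume E: "E \<subseteq> {0<..} \<and> E \<in> sets lebesgue"
    then show "E \<in> mu_sets"
      using mu_measurable_iff[of E] sets_ln_iff[of E] by (simp add: mu_sets_def)
  qed
  then show "mu_sets = {E. E \<subseteq> {0<..} \<and> E \<in> sets lebesgue}" by blast
  show "\<forall>E\<in>mu_sets. mu E = ennexp (\<integral>\<^sup>+ x\<in>E. ennreal (1 / x) \<partial>lebesgue)"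
  proof
    fix E assume "E \<in> mu_sets"
    then have E: "E \<subseteq> {0<..}" "E \<in> sets lebesgue" using iff by auto
    have lE: "ln ` E \<in> sets lebesgue" using sets_ln_iff[OF E(1)] E(2) by simp
    have "mu E = ennexp (outer_measure_of lebesgue (ln ` E))" unfolding mu_def by (rule mu_e_eq[OF E(1)])
    also have "\<dots> = ennexp (emeasure lebesgue (ln ` E))" using lE by simp
    also have "\<dots> = ennexp (\<integral>\<^sup>+ x\<in>E. ennreal (1 / x) \<partial>lebesgue)" using integral_ln[OF E(2,1)] by simp
    finally show "mu E = ennexp (\<integral>\<^sup>+ x\<in>E. ennreal (1 / x) \<partial>lebesgue)" .
  qed
qed

end
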